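(* Let $\mathcal{X},\mathcal{Y},\mathcal{Z}$ be sets, let $\mathcal{G}$ be a measurable space of maps $g:\mathcal{X}\to\mathcal{Z}$ (representations), let $\mathcal{H}$ be a set of maps $h:\mathcal{Z}\to\mathbb{R}$, and let $\ell$ be a real-valued loss function. Fix $T$ tasks with arbitrary datasets $\mathcal{S}_t=((x_{t,1},y_{t,1}),\dots,(x_{t,m_t},y_{t,m_t}))$, $t=1,\dots,T$, and run the EWA-LL algorithm (described in the context) with a prior $\pi_1$ on $\mathcal{G}$ and a parameter $\eta>0$. Assume that for every $t$ and every $g\in\mathcal{G}$, $\hat{L}_t(g)\in[0,C]$ and the within-task algorithm satisfies $\mathcal{R}_t(g)\le \beta(g,m_t)$. Then $$\frac{1}{T}\sum_{t=1}^T \mathbb{E}_{\hat g_t\sim\pi_t}\Big[\frac{1}{m_t}\sum_{i=1}^{m_t}\hat\ell_{t,i}\Big]\le \inf_{\rho}\Bigg\{\mathbb{E}_{g\sim\rho}\Bigg[\frac{1}{T}\sum_{t=1}^T\inf_{h_t\in\mathcal{H}}\frac{1}{m_t}\sum_{i=1}^{m_t}\ell\big(h_t\circ g(x_{t,i}),y_{t,i}\big)+\frac{1}{T}\sum_{t=1}^T\beta(g,m_t)\Bigg]+\frac{\eta C^2}{8}+\frac{\mathcal{K}(\rho,\pi_1)}{\eta T}\Bigg\},$$ where the infimum is over all probability measures $\rho$ on $\mathcal{G}$ and $\mathcal{K}(\rho,\pi_1)$ is the Kullback–Leibler divergence between $\rho$ and $\pi_1$.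
   Context: Within-task algorithm: for each task $t$ and each representation $g\in\mathcal{G}$, an online algorithm processes the points of $\mathcal{S}_t$ sequentially: at step $i$ it sees $x_{t,i}$, outputs a prediction $\hat y^g_{t,i}$ (depending only on $g$, $x_{t,1},\dots,x_{t,i}$, $y_{t,1},\dots,y_{t,i-1}$), then $y_{t,i}$ is revealed. Its average loss is $\hat{L}_t(g)=\frac{1}{m_t}\sum_{i=1}^{m_t}\ell(\hat y^g_{t,i},y_{t,i})$ (assumed measurable in $g$), and its within-task regret is $\mathcal{R}_t(g)=\hat{L}_t(g)-\inf_{h\in\mathcal{H}}\frac{1}{m_t}\sum_{i=1}^{m_t}\ell(h\circ g(x_{t,i}),y_{t,i})$. EWA-LL: given a probability measure $\pi_1$ on $\mathcal{G}$ and $\eta>0$, for $t=1,\dots,T$: (i) draw $\hat g_t\sim\pi_t$; (ii) run the within-task algorithm on $\mathcal{S}_t$ with representation $\hat g_t$, incurring losses $\hat\ell_{t,i}=\ell(\hat y^{\hat g_t}_{t,i},y_{t,i})$; (iii) set $\pi_{t+1}(\mathrm{d}g)=\exp(-\eta\hat L_t(g))\pi_t(\mathrm{d}g)/\int\exp(-\eta\hat L_t(\gamma))\pi_t(\mathrm{d}\gamma)$. The expectation $\mathbb{E}_{\hat g_t\sim\pi_t}$ is over the random draw of $\hat g_t$ at step (i). *)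

theory Defs
  imports "HOL-Probability.Probability"
begin

text \<open>A within-task online algorithm A: given representation g, the past examples
  (first i pairs) and the current input x_i, it outputs a real prediction.\<close>

definition within_loss ::
  "(real \<Rightarrow> 'y \<Rightarrow> real) \<Rightarrow> (('x \<Rightarrow> 'z) \<Rightarrow> ('x \<times> 'y) list \<Rightarrow> 'x \<Rightarrow> real)
   \<Rightarrow> ('x \<Rightarrow> 'z) \<Rightarrow> ('x \<times> 'y) list \<Rightarrow> real" where
  "within_loss loss A g S =
     (\<Sum>i<length S. loss (A g (take i S) (fst (S ! i))) (snd (S ! i))) / real (length S)"

text \<open>inf over h in H of the empirical loss of h o g (extended real: +infinity if H is empty).\<close>
definition best_in_class ::
  "(real \<Rightarrow> 'y \<Rightarrow> real) \<Rightarrow> ('z \<Rightarrow> real) set \<Rightarrow> ('x \<Rightarrow> 'z) \<Rightarrow> ('x \<times> 'y) list \<Rightarrow> ereal" where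
  "best_in_class loss H g S =
     (INF h\<in>H. ereal ((\<Sum>i<length S. loss (h (g (fst (S ! i)))) (snd (S ! i))) / real (length S)))"

definition within_regret ::
  "(real \<Rightarrow> 'y \<Rightarrow> real) \<Rightarrow> (('x \<Rightarrow> 'z) \<Rightarrow> ('x \<times> 'y) list \<Rightarrow> 'x \<Rightarrow> real)
   \<Rightarrow> ('z \<Rightarrow> real) set \<Rightarrow> ('x \<Rightarrow> 'z) \<Rightarrow> ('x \<times> 'y) list \<Rightarrow> ereal" where
  "within_regret loss A H g S = ereal (within_loss loss A g S) - best_in_class loss H g S"

text \<open>EWA-LL posteriors: ewa_post pi1 eta L t is pi_{t+1} (tasks indexed from 0),
  where L t g is the average within-task loss on task t with representation g.\<close>
fun ewa_post :: "'g measure \<Rightarrow> real \<Rightarrow> (nat \<Rightarrow> 'g \<Rightarrow> real) \<Rightarrow> nat \<Rightarrow> 'g measure" where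
  "ewa_post \<pi> \<eta> L 0 = \<pi>"
| "ewa_post \<pi> \<eta> L (Suc t) =
     density (ewa_post \<pi> \<eta> L t)
       (\<lambda>g. ennreal (exp (- \<eta> * L t g) /
                      (\<integral>\<gamma>. exp (- \<eta> * L t \<gamma>) \<partial>(ewa_post \<pi> \<eta> L t))))"

definition KL_div :: "'a measure \<Rightarrow> 'a measure \<Rightarrow> ennreal" where
  "KL_div \<rho> \<pi> =
     (if absolutely_continuous \<pi> \<rho> \<and> integrable \<rho> (entropy_density (exp 1) \<pi> \<rho>)
      then ennreal (KL_divergence (exp 1) \<pi> \<rho>) else \<infinity>)"

end

theory Submission
  imports Defs
begin


lemma DV:
  fixes \<pi> \<rho> :: "'a measure" and f :: "'a \<Rightarrow> real"
  assumes pi: "prob_space \<pi>" and rho: "prob_space \<rho>" and sets: "sets \<rho> = sets \<pi>"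
    and ac: "absolutely_continuous \<pi> \<rho>"
    and int: "integrable \<rho> (entropy_density (exp 1) \<pi> \<rho>)"
    and fm[measurable]: "f \<in> borel_measurable \<pi>"
    and fb: "\<And>x. x \<in> space \<pi> \<Longrightarrow> \<bar>f x\<bar> \<le> K"
  shows "(\<integral>x. f x \<partial>\<rho>) - KL_divergence (exp 1) \<pi> \<rho> \<le> ln (\<integral>x. exp (f x) \<partial>\<pi>)"
proof -
  interpret P: prob_space \<pi> by fact
  interpret R: prob_space \<rho> by fact
  define r where "r x = enn2real (RN_deriv \<pi> \<rho> x)" for x
  have rm[measurable]: "r \<in> borel_measurable \<pi>" unfolding r_def by measurable
  have r0: "0 \<le> r x" for x by (simp add: r_def)
  have "density \<pi> (RN_deriv \<pi> \<rho>) = \<rho>" by (rule P.density_RN_deriv[OF ac sets])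
  moreover have "AE x in \<pi>. RN_deriv \<pi> \<rho> x \<noteq> \<infinity>"
    by (rule P.RN_deriv_finite[OF _ ac sets]) unfold_locales
  then have "density \<pi> (RN_deriv \<pi> \<rho>) = density \<pi> (\<lambda>x. ennreal (r x))"
    by (intro density_cong) (auto simp: r_def ennreal_enn2real_if elim!: eventually_mono)
  ultimately have dens: "\<rho> = density \<pi> (\<lambda>x. ennreal (r x))" by simp
  have KL: "KL_divergence (exp 1) \<pi> \<rho> = (\<integral>x. ln (r x) \<partial>\<rho>)"
    by (simp add: KL_divergence_def entropy_density_def r_def comp_def log_def)
  have intln: "integrable \<rho> (\<lambda>x. ln (r x))"
    using int by (simp add: entropy_density_def r_def comp_def log_def)
  have fmr[measurable]: "f \<in> borel_measurable \<rho>" by (subst measurable_cong_sets[OF sets refl]) (rule fm)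
  have sp: "space \<rho> = space \<pi>" using sets by (rule sets_eq_imp_space_eq)
  have intf: "integrable \<rho> f"
    by (rule R.integrable_const_bound[where B=K]) (auto intro!: AE_I2 simp: sp fb)
  define Z where "Z = (\<integral>x. exp (f x) \<partial>\<pi>)"
  have intexp: "integrable \<pi> (\<lambda>x. exp (f x))"
    by (rule P.integrable_const_bound[where B="exp K"]) (auto intro!: AE_I2 dest!: fb simp: abs_le_iff)
  have "(\<integral>x. exp (-K) \<partial>\<pi>) \<le> Z" unfolding Z_def
    by (rule integral_mono[OF _ intexp]) (auto dest!: fb simp: abs_le_iff)
  then have Zpos: "0 < Z" using P.prob_space by (simp add: order_less_le_trans[OF exp_gt_zero])
  define h where "h x = exp (f x) / (Z * r x)" for x
  have hm[measurable]: "h \<in> borel_measurable \<pi>" unfolding h_def by measurable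
  have rh: "r x * h x = (if r x = 0 then 0 else exp (f x) / Z)" for x
    by (simp add: h_def)
  have intrh: "integrable \<pi> (\<lambda>x. r x * h x)"
  proof (rule P.integrable_const_bound[where B="exp K / Z"])
    show "AE x in \<pi>. norm (r x * h x) \<le> exp K / Z"
    proof (rule AE_I2)
      fix x assume "x \<in> space \<pi>"
      then have "f x \<le> K" using fb[of x] by auto
      then have "exp (f x) \<le> exp K" by simp
      then show "norm (r x * h x) \<le> exp K / Z" using Zpos by (auto simp: rh divide_right_mono)
    qed
  qed measurable
  have inth: "integrable \<rho> h"
    unfolding dens by (subst integrable_density) (auto simp: r0 intrh)
  have AEr: "AE x in \<rho>. 0 < r x"
    unfolding dens by (subst AE_density) auto
  have "(\<integral>x. f x \<partial>\<rho>) - KL_divergence (exp 1) \<pi> \<rho> - ln Z = (\<integral>x. f x - ln (r x) - ln Z \<partial>\<rho>)"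
    using intf intln by (simp add: KL R.prob_space)
  also have "\<dots> \<le> (\<integral>x. h x - 1 \<partial>\<rho>)"
  proof (rule integral_mono_AE)
    show "integrable \<rho> (\<lambda>x. f x - ln (r x) - ln Z)" using intf intln by auto
    show "integrable \<rho> (\<lambda>x. h x - 1)" using inth by auto
    show "AE x in \<rho>. f x - ln (r x) - ln Z \<le> h x - 1"
      using AEr
    proof (rule eventually_mono)
      fix x assume rx: "0 < r x"
      have "f x - ln (r x) - ln Z = ln (h x)"
        using rx Zpos by (simp add: h_def ln_div ln_mult)
      also have "\<dots> \<le> h x - 1" by (rule ln_le_minus_one) (use rx Zpos in \<open>simp add: h_def\<close>)
      finally show "f x - ln (r x) - ln Z \<le> h x - 1" .
    qed
  qed
  also have "\<dots> = (\<integral>x. h x \<partial>\<rho>) - 1" using inth by (simp add: R.prob_space)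
  also have "(\<integral>x. h x \<partial>\<rho>) = (\<integral>x. r x * h x \<partial>\<pi>)"
    unfolding dens by (subst integral_density) (auto simp: r0)
  also have "(\<integral>x. r x * h x \<partial>\<pi>) \<le> (\<integral>x. exp (f x) / Z \<partial>\<pi>)"
    by (rule integral_mono[OF intrh]) (auto simp: rh intexp Zpos less_imp_le)
  also have "(\<integral>x. exp (f x) / Z \<partial>\<pi>) = 1" using Zpos by (simp add: Z_def)
  finally show ?thesis by (simp add: Z_def)
qed



lemma hoeff:
  fixes M :: "'a measure" and f :: "'a \<Rightarrow> real"
  assumes P: "prob_space M" and fm[measurable]: "f \<in> borel_measurable M"
    and fb: "\<And>x. x \<in> space M \<Longrightarrow> f x \<in> {0..C}" and eta: "\<eta> > 0"
  shows "ln (\<integral>x. exp (- \<eta> * f x) \<partial>M) \<le> - \<eta> * (\<integral>x. f x \<partial>M) + \<eta>\<^sup>2 * C\<^sup>2 / 8"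
proof -
  interpret prob_space M by fact
  interpret I: interval_bounded_random_variable M "\<lambda>x. - f x" "-C" 0
    by unfold_locales (auto intro!: AE_I2 dest: fb)
  define E where "E = (\<integral>x. f x \<partial>M)"
  have intf: "integrable M f"
    by (rule integrable_const_bound[where B=C]) (auto intro!: AE_I2 dest: fb)
  have "nn_integral M (\<lambda>x. exp (\<eta> * ((- f x) - expectation (\<lambda>x. - f x))))
        \<le> ennreal (exp (\<eta>\<^sup>2 * (0 - - C)\<^sup>2 / 8))"
    by (rule I.Hoeffdings_lemma_nn_integral[OF eta])
  moreover have "expectation (\<lambda>x. - f x) = - E" by (simp add: E_def)
  ultimately have h1: "nn_integral M (\<lambda>x. exp (- \<eta> * f x + \<eta> * E)) \<le> ennreal (exp (\<eta>\<^sup>2 * C\<^sup>2 / 8))"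
    by (simp add: algebra_simps)
  have intg: "integrable M (\<lambda>x. exp (- \<eta> * f x))"
  proof (rule integrable_const_bound[where B=1])
    show "AE x in M. norm (exp (- \<eta> * f x)) \<le> 1"
    proof (rule AE_I2)
      fix x assume "x \<in> space M"
      then have "0 \<le> f x" using fb by auto
      then show "norm (exp (- \<eta> * f x)) \<le> 1" using eta by simp
    qed
  qed measurable
  have "nn_integral M (\<lambda>x. exp (- \<eta> * f x + \<eta> * E)) = ennreal (\<integral>x. exp (- \<eta> * f x + \<eta> * E) \<partial>M)"
  proof (rule nn_integral_eq_integral)
    have "integrable M (\<lambda>x. exp (- \<eta> * f x) * exp (\<eta> * E))" using intg by simp
    then show "integrable M (\<lambda>x. exp (- \<eta> * f x + \<eta> * E))" by (simp only: exp_add)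
  qed auto
  also have "(\<integral>x. exp (- \<eta> * f x + \<eta> * E) \<partial>M) = (\<integral>x. exp (- \<eta> * f x) \<partial>M) * exp (\<eta> * E)"
    by (simp only: exp_add integral_mult_left_zero)
  finally have "(\<integral>x. exp (- \<eta> * f x) \<partial>M) * exp (\<eta> * E) \<le> exp (\<eta>\<^sup>2 * C\<^sup>2 / 8)"
    using h1 by (simp add: ennreal_le_iff2 del: ennreal_le_iff) 
  moreover have Ipos: "0 < (\<integral>x. exp (- \<eta> * f x) \<partial>M)"
  proof -
    have "(\<integral>x. exp (- \<eta> * C) \<partial>M) \<le> (\<integral>x. exp (- \<eta> * f x) \<partial>M)"
      by (rule integral_mono[OF _ intg]) (use eta in \<open>auto dest!: fb\<close>)
    then show ?thesis using prob_space by (simp add: order_less_le_trans[OF exp_gt_zero])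
  qed
  ultimately have "ln ((\<integral>x. exp (- \<eta> * f x) \<partial>M) * exp (\<eta> * E)) \<le> \<eta>\<^sup>2 * C\<^sup>2 / 8"
  proof -
    assume a: "(\<integral>x. exp (- \<eta> * f x) \<partial>M) * exp (\<eta> * E) \<le> exp (\<eta>\<^sup>2 * C\<^sup>2 / 8)" and
      b: "0 < (\<integral>x. exp (- \<eta> * f x) \<partial>M)"
    have "ln ((\<integral>x. exp (- \<eta> * f x) \<partial>M) * exp (\<eta> * E)) \<le> ln (exp (\<eta>\<^sup>2 * C\<^sup>2 / 8))"
      using a b by (subst ln_le_cancel_iff) auto
    then show ?thesis by simp
  qed
  then show ?thesis using Ipos by (simp add: ln_mult E_def)
qed



locale ewa =
  fixes \<pi>1 :: "'g measure" and \<eta> C :: real and L :: "nat \<Rightarrow> 'g \<Rightarrow> real" and T :: nat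
  assumes P: "prob_space \<pi>1" and eta: "\<eta> > 0"
    and Lm: "\<And>t. t < T \<Longrightarrow> L t \<in> borel_measurable \<pi>1"
    and Lb: "\<And>t g. t < T \<Longrightarrow> g \<in> space \<pi>1 \<Longrightarrow> L t g \<in> {0..C}"
begin

interpretation prob_space \<pi>1 by (rule P)

definition F where "F t g = (\<Sum>s<t. L s g)"
definition Z where "Z t = (\<integral>g. exp (- \<eta> * F t g) \<partial>\<pi>1)"
definition W where "W t g = exp (- \<eta> * F t g) / Z t"

lemma Fm: "t \<le> T \<Longrightarrow> F t \<in> borel_measurable \<pi>1"
  unfolding F_def[abs_def] by (intro borel_measurable_sum) (auto intro: Lm)

lemma Fb: "t \<le> T \<Longrightarrow> g \<in> space \<pi>1 \<Longrightarrow> 0 \<le> F t g \<and> F t g \<le> real t * C"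
proof -
  assume t: "t \<le> T" and g: "g \<in> space \<pi>1"
  have "0 \<le> F t g" unfolding F_def using Lb[OF _ g] t by (intro sum_nonneg) auto
  moreover have "F t g \<le> (\<Sum>s<t. C)" unfolding F_def using Lb[OF _ g] t by (intro sum_mono) auto
  ultimately show ?thesis by simp
qed

lemma intE: "t \<le> T \<Longrightarrow> integrable \<pi>1 (\<lambda>g. exp (- \<eta> * F t g))"
proof -
  assume t: "t \<le> T"
  show ?thesis
  proof (rule integrable_const_bound[where B=1])
    show "AE x in \<pi>1. norm (exp (- \<eta> * F t x)) \<le> 1"
      using Fb[OF t] eta by (intro AE_I2) auto
  qed (use Fm[OF t] in measurable)
qed

lemma Zpos: "t \<le> T \<Longrightarrow> 0 < Z t"
proof -
  assume t: "t \<le> T"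
  have "(\<integral>x. exp (- \<eta> * (real t * C)) \<partial>\<pi>1) \<le> Z t" unfolding Z_def
    by (rule integral_mono[OF _ intE[OF t]]) (use Fb[OF t] eta in auto)
  then show ?thesis using prob_space by (simp add: order_less_le_trans[OF exp_gt_zero])
qed

lemma Z0: "Z 0 = 1" by (simp add: Z_def F_def prob_space)

lemma Wm: "t \<le> T \<Longrightarrow> W t \<in> borel_measurable \<pi>1"
  unfolding W_def[abs_def] using Fm by measurable

lemma W0: "0 \<le> W t g" if "t \<le> T" using Zpos[OF that] by (simp add: W_def)

lemma post: "t \<le> T \<Longrightarrow> ewa_post \<pi>1 \<eta> L t = density \<pi>1 (\<lambda>g. ennreal (W t g))"
proof (induction t)
  case 0
  then show ?case by (simp add: W_def Z0 F_def density_1)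
next
  case (Suc t)
  then have t: "t < T" "t \<le> T" by auto
  note IH = Suc.IH[OF t(2)]
  note [measurable] = Wm[OF t(2)] Lm[OF t(1)] Wm[OF Suc.prems]
  define N where "N = (\<integral>\<gamma>. exp (- \<eta> * L t \<gamma>) \<partial>ewa_post \<pi>1 \<eta> L t)"
  have "N = (\<integral>g. W t g * exp (- \<eta> * L t g) \<partial>\<pi>1)"
    unfolding N_def IH by (subst integral_density) (auto simp: W0[OF t(2)])
  also have "\<dots> = (\<integral>g. exp (- \<eta> * F (Suc t) g) / Z t \<partial>\<pi>1)"
    by (intro Bochner_Integration.integral_cong) (auto simp: W_def F_def algebra_simps exp_add[symmetric])
  also have "\<dots> = Z (Suc t) / Z t" by (simp add: Z_def)
  finally have N: "N = Z (Suc t) / Z t" .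
  have Zp: "0 < Z t" "0 < Z (Suc t)" using Zpos Suc.prems t by auto
  have "ewa_post \<pi>1 \<eta> L (Suc t) =
      density (ewa_post \<pi>1 \<eta> L t) (\<lambda>g. ennreal (exp (- \<eta> * L t g) / N))"
    by (simp only: ewa_post.simps N_def)
  also have "\<dots> = density \<pi>1 (\<lambda>g. ennreal (W t g) * ennreal (exp (- \<eta> * L t g) / N))"
    unfolding IH by (rule density_density_eq) measurable
  also have "\<dots> = density \<pi>1 (\<lambda>g. ennreal (W (Suc t) g))"
  proof (intro density_cong)
    show "AE x in \<pi>1. ennreal (W t x) * ennreal (exp (- \<eta> * L t x) / N) = ennreal (W (Suc t) x)"
    proof (rule AE_I2)
      fix x
      have "W t x * (exp (- \<eta> * L t x) / N) = W (Suc t) x"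
        using Zp by (simp add: N W_def F_def algebra_simps exp_add[symmetric] field_simps)
      then show "ennreal (W t x) * ennreal (exp (- \<eta> * L t x) / N) = ennreal (W (Suc t) x)"
        using Zp W0[OF t(2), of x] by (simp add: ennreal_mult[symmetric] N)
    qed
  qed measurable
  finally show ?case .
qed

lemma post_prob: "t \<le> T \<Longrightarrow> prob_space (ewa_post \<pi>1 \<eta> L t)"
proof -
  assume t: "t \<le> T"
  note [measurable] = Wm[OF t]
  show ?thesis unfolding post[OF t]
  proof (rule prob_spaceI)
    have "emeasure (density \<pi>1 (\<lambda>g. ennreal (W t g))) (space \<pi>1) = (\<integral>\<^sup>+g. ennreal (W t g) \<partial>\<pi>1)"
      by (simp add: emeasure_density)
    also have "\<dots> = ennreal (\<integral>g. W t g \<partial>\<pi>1)"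
      using intE[OF t] by (intro nn_integral_eq_integral) (auto simp: W_def W0[OF t] intro!: AE_I2 divide_nonneg_pos Zpos[OF t])
    also have "(\<integral>g. W t g \<partial>\<pi>1) = 1" using Zpos[OF t] by (simp add: W_def Z_def)
    finally show "emeasure (density \<pi>1 (\<lambda>g. ennreal (W t g))) (space (density \<pi>1 (\<lambda>g. ennreal (W t g)))) = 1"
      by simp
  qed
qed

lemma N_eq: "t < T \<Longrightarrow> (\<integral>\<gamma>. exp (- \<eta> * L t \<gamma>) \<partial>ewa_post \<pi>1 \<eta> L t) = Z (Suc t) / Z t"
proof -
  assume t: "t < T"
  note [measurable] = Wm[of t] Lm[OF t]
  have "(\<integral>\<gamma>. exp (- \<eta> * L t \<gamma>) \<partial>ewa_post \<pi>1 \<eta> L t) = (\<integral>g. W t g * exp (- \<eta> * L t g) \<partial>\<pi>1)"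
    unfolding post[OF less_imp_le[OF t]] by (subst integral_density) (use t in \<open>auto simp: W0\<close>)
  also have "\<dots> = (\<integral>g. exp (- \<eta> * F (Suc t) g) / Z t \<partial>\<pi>1)"
    by (intro Bochner_Integration.integral_cong) (auto simp: W_def F_def algebra_simps exp_add[symmetric])
  also have "\<dots> = Z (Suc t) / Z t" by (simp add: Z_def)
  finally show ?thesis .
qed

end




lemma pointwise_le:
  fixes b :: ereal
  assumes "ereal x - b \<le> ereal y"
  shows "ereal x \<le> b + ereal y"
  using assms by (cases b) auto

theorem theorem1:
  fixes \<pi>1 :: "('x \<Rightarrow> 'z) measure"
    and H :: "('z \<Rightarrow> real) set"
    and loss :: "real \<Rightarrow> 'y \<Rightarrow> real"
    and A :: "('x \<Rightarrow> 'z) \<Rightarrow> ('x \<times> 'y) list \<Rightarrow> 'x \<Rightarrow> real"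
    and S :: "nat \<Rightarrow> ('x \<times> 'y) list"
    and T :: nat and \<eta> C :: real
    and \<beta> :: "('x \<Rightarrow> 'z) \<Rightarrow> nat \<Rightarrow> real"
  assumes prior: "prob_space \<pi>1"
    and T_pos: "T > 0"
    and eta_pos: "\<eta> > 0"
    and meas: "\<And>t. t < T \<Longrightarrow> (\<lambda>g. within_loss loss A g (S t)) \<in> borel_measurable \<pi>1"
    and bounded: "\<And>t g. t < T \<Longrightarrow> g \<in> space \<pi>1 \<Longrightarrow>
                     within_loss loss A g (S t) \<in> {0..C}"
    and regret: "\<And>t g. t < T \<Longrightarrow> g \<in> space \<pi>1 \<Longrightarrow>
                     within_regret loss A H g (S t) \<le> ereal (\<beta> g (length (S t)))"
  shows "ennreal ((1 / real T) * (\<Sum>t<T.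
            \<integral>g. within_loss loss A g (S t) \<partial>(ewa_post \<pi>1 \<eta> (\<lambda>t g. within_loss loss A g (S t)) t)))
         \<le> (INF \<rho>\<in>{\<rho>. prob_space \<rho> \<and> sets \<rho> = sets \<pi>1}.
              (\<integral>\<^sup>+ g. e2ennreal ((1 / ereal (real T)) *
                     ((\<Sum>t<T. best_in_class loss H g (S t)) + (\<Sum>t<T. ereal (\<beta> g (length (S t))))))
                 \<partial>\<rho>)
              + ennreal (\<eta> * C\<^sup>2 / 8)
              + KL_div \<rho> \<pi>1 / ennreal (\<eta> * real T))"
proof -
  define L where "L = (\<lambda>t g. within_loss loss A g (S t))"
  have e: "ewa \<pi>1 \<eta> C L T"
  proof (rule ewa.intro[OF prior eta_pos])
    fix t assume "t < T" then show "L t \<in> borel_measurable \<pi>1" unfolding L_def by (rule meas)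
  next
    fix t g assume "t < T" "g \<in> space \<pi>1" then show "L t g \<in> {0..C}" unfolding L_def by (rule bounded)
  qed
  interpret ewa \<pi>1 \<eta> C L T by (rule e)
  interpret P: prob_space \<pi>1 by (rule prior)
  obtain g0 where g0: "g0 \<in> space \<pi>1" using P.not_empty by auto
  have C0: "0 \<le> C" using bounded[OF T_pos g0] by auto
  define E where "E t = (\<integral>g. L t g \<partial>ewa_post \<pi>1 \<eta> L t)" for t
  have hT: "ln (Z (Suc t) / Z t) \<le> - \<eta> * E t + \<eta>\<^sup>2 * C\<^sup>2 / 8" if t: "t < T" for t
  proof -
    have sets_eq: "sets (ewa_post \<pi>1 \<eta> L t) = sets \<pi>1" using t by (simp add: post)
    have sp_eq: "space (ewa_post \<pi>1 \<eta> L t) = space \<pi>1" using t by (simp add: post)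
    have m: "L t \<in> borel_measurable (ewa_post \<pi>1 \<eta> L t)"
      by (subst measurable_cong_sets[OF sets_eq refl]) (rule Lm[OF t])
    have "ln (\<integral>x. exp (- \<eta> * L t x) \<partial>ewa_post \<pi>1 \<eta> L t) \<le> - \<eta> * E t + \<eta>\<^sup>2 * C\<^sup>2 / 8"
      unfolding E_def by (rule hoeff[OF post_prob m _ eta_pos]) (use t Lb in \<open>auto simp: sp_eq\<close>)
    then show ?thesis using N_eq[OF t] by simp
  qed
  have lnZT: "ln (Z T) \<le> - \<eta> * (\<Sum>t<T. E t) + real T * (\<eta>\<^sup>2 * C\<^sup>2 / 8)"
  proof -
    have "ln (Z T) = (\<Sum>t<T. ln (Z (Suc t)) - ln (Z t))"
      by (subst sum_lessThan_telescope) (simp add: Z0)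
    also have "\<dots> = (\<Sum>t<T. ln (Z (Suc t) / Z t))"
    proof (intro sum.cong refl)
      fix t assume "t \<in> {..<T}"
      then have "0 < Z t" "0 < Z (Suc t)" by (auto intro!: Zpos)
      then show "ln (Z (Suc t)) - ln (Z t) = ln (Z (Suc t) / Z t)" by (simp add: ln_div)
    qed
    also have "\<dots> \<le> (\<Sum>t<T. - \<eta> * E t + \<eta>\<^sup>2 * C\<^sup>2 / 8)"
      by (intro sum_mono hT) simp
    also have "\<dots> = - \<eta> * (\<Sum>t<T. E t) + real T * (\<eta>\<^sup>2 * C\<^sup>2 / 8)"
      by (simp only: sum.distrib sum_distrib_left[symmetric] sum_constant) simp
    finally show ?thesis .
  qed
  have LHS: "(1 / real T) * (\<Sum>t<T.
            \<integral>g. within_loss loss A g (S t) \<partial>(ewa_post \<pi>1 \<eta> (\<lambda>t g. within_loss loss A g (S t)) t))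
        = (1 / real T) * (\<Sum>t<T. E t)"
    by (simp add: E_def L_def)
  show ?thesis unfolding LHS
  proof (rule INF_greatest)
    fix \<rho> assume "\<rho> \<in> {\<rho>. prob_space \<rho> \<and> sets \<rho> = sets \<pi>1}"
    then have R: "prob_space \<rho>" and sets: "sets \<rho> = sets \<pi>1" by auto
    interpret R: prob_space \<rho> by (rule R)
    have sp: "space \<rho> = space \<pi>1" using sets by (rule sets_eq_imp_space_eq)
    have FTm: "F T \<in> borel_measurable \<rho>"
      by (subst measurable_cong_sets[OF sets refl]) (rule Fm, simp)
    define G where "G g = e2ennreal ((1 / ereal (real T)) *
                     ((\<Sum>t<T. best_in_class loss H g (S t)) + (\<Sum>t<T. ereal (\<beta> g (length (S t))))))" for g
    define Y where "Y = (\<integral>g. (1 / real T) * F T g \<partial>\<rho>)"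
    have FTb: "g \<in> space \<rho> \<Longrightarrow> 0 \<le> F T g \<and> F T g \<le> real T * C" for g
      using Fb[of T g] sp by auto
    have intFT: "integrable \<rho> (\<lambda>g. (1 / real T) * F T g)"
    proof (rule R.integrable_const_bound[where B=C])
      show "AE x in \<rho>. norm (1 / real T * F T x) \<le> C"
      proof (rule AE_I2)
        fix x assume "x \<in> space \<rho>"
        then have "0 \<le> F T x" "F T x \<le> real T * C" using FTb by auto
        then show "norm (1 / real T * F T x) \<le> C" using T_pos by (simp add: field_simps)
      qed
    qed (use FTm in measurable)
    have Y0: "0 \<le> Y" unfolding Y_def using FTb T_pos by (intro integral_nonneg_AE AE_I2) auto
    have YG: "ennreal Y \<le> (\<integral>\<^sup>+ g. G g \<partial>\<rho>)"
    proof -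
      have "ennreal Y = (\<integral>\<^sup>+ g. ennreal ((1 / real T) * F T g) \<partial>\<rho>)"
        unfolding Y_def by (rule nn_integral_eq_integral[symmetric, OF intFT])
          (use FTb T_pos in \<open>auto intro!: AE_I2\<close>)
      also have "\<dots> \<le> (\<integral>\<^sup>+ g. G g \<partial>\<rho>)"
      proof (rule nn_integral_mono)
        fix g assume g: "g \<in> space \<rho>"
        then have g': "g \<in> space \<pi>1" by (simp add: sp)
        have "ereal (F T g) = (\<Sum>t<T. ereal (L t g))" by (simp add: F_def)
        also have "\<dots> \<le> (\<Sum>t<T. best_in_class loss H g (S t) + ereal (\<beta> g (length (S t))))"
        proof (rule sum_mono)
          fix t assume "t \<in> {..<T}"
          then show "ereal (L t g) \<le> best_in_class loss H g (S t) + ereal (\<beta> g (length (S t)))"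
            using regret[of t g] g' by (intro pointwise_le) (auto simp: L_def within_regret_def)
        qed
        also have "\<dots> = (\<Sum>t<T. best_in_class loss H g (S t)) + (\<Sum>t<T. ereal (\<beta> g (length (S t))))"
          by (rule sum.distrib)
        finally have le: "ereal (F T g) \<le> \<dots>" .
        have "ereal ((1 / real T) * F T g) = (1 / ereal (real T)) * ereal (F T g)"
          using T_pos by simp
        also have "\<dots> \<le> (1 / ereal (real T)) * ((\<Sum>t<T. best_in_class loss H g (S t)) + (\<Sum>t<T. ereal (\<beta> g (length (S t)))))"
          by (rule ereal_mult_left_mono[OF le]) (use T_pos in simp)
        finally have "e2ennreal (ereal ((1 / real T) * F T g)) \<le> G g"
          unfolding G_def by (rule e2ennreal_mono)
        then show "ennreal ((1 / real T) * F T g) \<le> G g" by simp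
      qed
      finally show ?thesis .
    qed
    show "ennreal ((1 / real T) * (\<Sum>t<T. E t)) \<le> (\<integral>\<^sup>+ g. G g \<partial>\<rho>) + ennreal (\<eta> * C\<^sup>2 / 8)
              + KL_div \<rho> \<pi>1 / ennreal (\<eta> * real T)"
    proof (cases "absolutely_continuous \<pi>1 \<rho> \<and> integrable \<rho> (entropy_density (exp 1) \<pi>1 \<rho>)")
      case False
      then have "KL_div \<rho> \<pi>1 = top" unfolding KL_div_def by (simp only: if_not_P[OF False]) simp
      then have "KL_div \<rho> \<pi>1 / ennreal (\<eta> * real T) = top"
        by (simp add: ennreal_top_divide)
      then show ?thesis by simp
    next
      case True
      define K where "K = KL_divergence (exp 1) \<pi>1 \<rho>"
      have KL: "KL_div \<rho> \<pi>1 = ennreal K" using True by (simp add: KL_div_def K_def)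
      have fm: "(\<lambda>g. - \<eta> * F T g) \<in> borel_measurable \<pi>1" using Fm[of T] by measurable
      have dv: "(\<integral>g. - \<eta> * F T g \<partial>\<rho>) - K \<le> ln (\<integral>g. exp (- \<eta> * F T g) \<partial>\<pi>1)"
        unfolding K_def
      proof (rule DV[OF prior R sets _ _ fm, where K="\<eta> * (real T * C)"])
        show "absolutely_continuous \<pi>1 \<rho>" "integrable \<rho> (entropy_density (exp 1) \<pi>1 \<rho>)" using True by auto
        fix x assume "x \<in> space \<pi>1"
        then show "\<bar>- \<eta> * F T x\<bar> \<le> \<eta> * (real T * C)"
          using Fb[of T x] eta_pos by (auto simp: abs_mult mult_left_mono)
      qed
      have "(\<integral>g. - \<eta> * F T g \<partial>\<rho>) = - \<eta> * real T * Y" unfolding Y_def using T_pos by simp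
      with dv lnZT have key0: "- \<eta> * real T * Y - K \<le> - \<eta> * (\<Sum>t<T. E t) + real T * (\<eta>\<^sup>2 * C\<^sup>2 / 8)"
        unfolding Z_def by linarith
      define K' where "K' = max K 0"
      have key: "(1 / real T) * (\<Sum>t<T. E t) \<le> Y + \<eta> * C\<^sup>2 / 8 + K' / (\<eta> * real T)"
      proof -
        have "\<eta> * (\<Sum>t<T. E t) \<le> \<eta> * real T * Y + K' + real T * (\<eta>\<^sup>2 * C\<^sup>2 / 8)"
          using key0 by (simp add: K'_def)
        then have "\<eta> * (\<Sum>t<T. E t) / (\<eta> * real T) \<le> (\<eta> * real T * Y + K' + real T * (\<eta>\<^sup>2 * C\<^sup>2 / 8)) / (\<eta> * real T)"
          using eta_pos T_pos by (intro divide_right_mono) auto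
        then show ?thesis using eta_pos T_pos by (simp add: field_simps power2_eq_square)
      qed
      have K'0: "0 \<le> K'" by (simp add: K'_def)
      have KK': "ennreal K = ennreal K'" by (simp add: K'_def max_def ennreal_neg)
      have "ennreal ((1 / real T) * (\<Sum>t<T. E t)) \<le> ennreal (Y + \<eta> * C\<^sup>2 / 8 + K' / (\<eta> * real T))"
        by (rule ennreal_leI[OF key])
      also have "\<dots> = ennreal Y + ennreal (\<eta> * C\<^sup>2 / 8) + ennreal K' / ennreal (\<eta> * real T)"
        using Y0 K'0 eta_pos T_pos by (simp add: ennreal_plus divide_ennreal)
      also have "\<dots> \<le> (\<integral>\<^sup>+ g. G g \<partial>\<rho>) + ennreal (\<eta> * C\<^sup>2 / 8) + KL_div \<rho> \<pi>1 / ennreal (\<eta> * real T)"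
        unfolding KL KK' using YG by (intro add_right_mono) 
      finally show ?thesis .
    qed
  qed
qed

end
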